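(* Let $D$ be a digraph and $X, Y \subseteq V(D)$ such that no vertex of $X$ has an ingoing edge and no vertex of $Y$ has an outgoing edge. Suppose that $X$ is joinable to $Y$ and that $X'$ is joinable to $Y'$ for some $X' \subseteq X$ and $Y' \subseteq Y$ with $|X \setminus X'| < \infty$. Then there is some $Y'' \subseteq Y$ such that $X$ is joinable to $Y''$ and $|Y'' \setminus Y'| \le |X \setminus X'|$.
   Context: Digraphs have no loops or parallel edges. An $(A,B)$-path is a directed path whose initial vertex is in $A$, whose terminal vertex is in $B$, and which is internally disjoint from $A \cup B$; an $(A,B)$-path-system is a set of pairwise vertex-disjoint $(A,B)$-paths. $V^-(\mathcal{P})$ is the set of initial vertices of the paths in $\mathcal{P}$. $A$ is joinable to $B$ (in $D$) if there is an $(A,B)$-path-system $\mathcal{P}$ in $D$ with $V^-(\mathcal{P}) = A$. *)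

theory Defs
  imports Main
begin

definition digraph :: "'a set \<Rightarrow> ('a \<times> 'a) set \<Rightarrow> bool" where
  "digraph V E \<longleftrightarrow> E \<subseteq> V \<times> V \<and> (\<forall>v. (v, v) \<notin> E)"

definition dpath :: "'a set \<Rightarrow> ('a \<times> 'a) set \<Rightarrow> 'a list \<Rightarrow> bool" where
  "dpath V E p \<longleftrightarrow> p \<noteq> [] \<and> distinct p \<and> set p \<subseteq> V \<and>
     (\<forall>i. Suc i < length p \<longrightarrow> (p ! i, p ! Suc i) \<in> E)"

definition AB_path :: "'a set \<Rightarrow> ('a \<times> 'a) set \<Rightarrow> 'a set \<Rightarrow> 'a set \<Rightarrow> 'a list \<Rightarrow> bool" where
  "AB_path V E A B p \<longleftrightarrow> dpath V E p \<and> hd p \<in> A \<and> last p \<in> B \<and>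
     set (butlast (tl p)) \<inter> (A \<union> B) = {}"

definition AB_path_system :: "'a set \<Rightarrow> ('a \<times> 'a) set \<Rightarrow> 'a set \<Rightarrow> 'a set \<Rightarrow> 'a list set \<Rightarrow> bool" where
  "AB_path_system V E A B P \<longleftrightarrow> (\<forall>p\<in>P. AB_path V E A B p) \<and>
     (\<forall>p\<in>P. \<forall>q\<in>P. p \<noteq> q \<longrightarrow> set p \<inter> set q = {})"

definition init_vertices :: "'a list set \<Rightarrow> 'a set" where
  "init_vertices P = hd ` P"

definition joinable :: "'a set \<Rightarrow> ('a \<times> 'a) set \<Rightarrow> 'a set \<Rightarrow> 'a set \<Rightarrow> bool" where
  "joinable V E A B \<longleftrightarrow> (\<exists>P. AB_path_system V E A B P \<and> init_vertices P = A)"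

end

theory Submission
  imports Defs
begin

lemma succ_nth:
  "successively P xs \<longleftrightarrow> (\<forall>i. Suc i < length xs \<longrightarrow> P (xs ! i) (xs ! Suc i))"
proof (induction xs)
  case Nil
  then show ?case by simp
next
  case (Cons x xs)
  show ?case
  proof
    assume a: "successively P (x # xs)"
    show "\<forall>i. Suc i < length (x # xs) \<longrightarrow> P ((x # xs) ! i) ((x # xs) ! Suc i)"
    proof (intro allI impI)
      fix i assume i: "Suc i < length (x # xs)"
      show "P ((x # xs) ! i) ((x # xs) ! Suc i)"
      proof (cases i)
        case 0
        then show ?thesis using a i by (cases xs) auto
      next
        case (Suc j)
        have "successively P xs" using a by (cases xs) (auto simp: successively_Cons)
        then have "\<forall>i. Suc i < length xs \<longrightarrow> P (xs ! i) (xs ! Suc i)" using Cons.IH by blast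
        then show ?thesis using i Suc by simp
      qed
    qed
  next
    assume a: "\<forall>i. Suc i < length (x # xs) \<longrightarrow> P ((x # xs) ! i) ((x # xs) ! Suc i)"
    have "\<forall>i. Suc i < length xs \<longrightarrow> P (xs ! i) (xs ! Suc i)"
    proof (intro allI impI)
      fix i assume "Suc i < length xs"
      then show "P (xs ! i) (xs ! Suc i)" using a[rule_format, of "Suc i"] by simp
    qed
    then have "successively P xs" using Cons.IH by simp
    moreover have "xs \<noteq> [] \<Longrightarrow> P x (hd xs)" using a[rule_format, of 0] by (cases xs) auto
    ultimately show "successively P (x # xs)" by (auto simp: successively_Cons)
  qed
qed

lemma dpath_succ:
  "dpath V E p \<longleftrightarrow> p \<noteq> [] \<and> distinct p \<and> set p \<subseteq> V \<and> successively (\<lambda>a b. (a, b) \<in> E) p"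
  unfolding dpath_def succ_nth by simp

lemma succ_take: "successively P xs \<Longrightarrow> successively P (take n xs)"
  using successively_append_iff[of P "take n xs" "drop n xs"] by simp

lemma succ_drop: "successively P xs \<Longrightarrow> successively P (drop n xs)"
  using successively_append_iff[of P "take n xs" "drop n xs"] by simp

lemma tw_less:
  assumes "\<exists>v\<in>set xs. \<not> P v"
  shows "length (takeWhile P xs) < length xs"
proof (rule ccontr)
  assume "\<not> ?thesis"
  then have "length (takeWhile P xs) = length xs" using length_takeWhile_le[of P xs] by simp
  then have "takeWhile P xs = xs" using takeWhile_eq_take[of P xs] by simp
  then have "set xs \<subseteq> {v. P v}" using set_takeWhileD[of _ P xs] by auto
  then show False using assms by auto
qed

lemma tw_before:
  assumes "i < length (takeWhile P xs)"
  shows "P (xs ! i)"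
proof -
  have "takeWhile P xs ! i \<in> set (takeWhile P xs)" using assms by (rule nth_mem)
  then have "P (takeWhile P xs ! i)" by (blast dest: set_takeWhileD)
  then show ?thesis using takeWhile_nth[OF assms] by simp
qed

lemma tw_mono:
  assumes "\<And>v. P v \<Longrightarrow> Q v"
  shows "length (takeWhile P xs) \<le> length (takeWhile Q xs)"
  using assms by (induction xs) auto

locale aug =
  fixes V :: "'a set" and E :: "('a \<times> 'a) set" and S :: "'a set"
    and Y :: "'a set" and Y' :: "'a set" and pp :: "'a \<Rightarrow> 'a list"
  assumes pp_path: "t \<in> S \<Longrightarrow> dpath V E (pp t)"
    and pp_hd: "t \<in> S \<Longrightarrow> hd (pp t) = t"
    and pp_last: "t \<in> S \<Longrightarrow> last (pp t) \<in> Y"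
    and pp_disj: "t \<in> S \<Longrightarrow> t' \<in> S \<Longrightarrow> t \<noteq> t' \<Longrightarrow> set (pp t) \<inter> set (pp t') = {}"
begin

definition Inv :: "'a list set \<Rightarrow> 'a \<Rightarrow> 'a set \<Rightarrow> bool" where
  "Inv R z T \<longleftrightarrow> z \<in> S \<and> (\<forall>r\<in>R. dpath V E r) \<and>
     (\<forall>r\<in>R. \<forall>r'\<in>R. r \<noteq> r' \<longrightarrow> set r \<inter> set r' = {}) \<and> hd ` R = S - {z} \<and>
     (\<forall>r\<in>R. last r \<in> Y') \<and>
     (\<forall>r\<in>R. \<exists>j<length (pp (hd r)). take (Suc j) r = take (Suc j) (pp (hd r)) \<and>
        set (drop (Suc j) r) = set r \<inter> T) \<and>
     T \<subseteq> \<Union> (set ` R)"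

definition prog :: "'a set \<Rightarrow> 'a \<Rightarrow> nat" where
  "prog T t = length (takeWhile (\<lambda>v. v \<notin> T) (pp t))"

definition hit :: "'a \<Rightarrow> 'a set \<Rightarrow> bool" where
  "hit z T \<longleftrightarrow> (\<exists>v\<in>set (pp z). v \<in> T)"

definition stp :: "'a list set \<times> 'a \<times> 'a set \<Rightarrow> 'a list set \<times> 'a \<times> 'a set" where
  "stp s = (case s of (R, z, T) \<Rightarrow> if hit z T then
     (let h = prog T z; w = pp z ! h; r = (SOME r. r \<in> R \<and> w \<in> set r);
          k = length (takeWhile (\<lambda>v. v \<noteq> w) r)
      in (insert (take (Suc h) (pp z) @ drop (Suc k) r) (R - {r}), hd r,
          T - set (take (Suc k) r)))
     else s)"

lemma prog_mono: "T' \<subseteq> T \<Longrightarrow> prog T t \<le> prog T' t"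
  unfolding prog_def by (rule tw_mono) auto

lemma prog_le: "prog T t \<le> length (pp t)"
  unfolding prog_def by (rule length_takeWhile_le)

lemma InvD:
  assumes "Inv R z T"
  shows "z \<in> S" "\<And>r. r \<in> R \<Longrightarrow> dpath V E r"
    "\<And>r r'. r \<in> R \<Longrightarrow> r' \<in> R \<Longrightarrow> r \<noteq> r' \<Longrightarrow> set r \<inter> set r' = {}"
    "hd ` R = S - {z}" "\<And>r. r \<in> R \<Longrightarrow> last r \<in> Y'"
    "\<And>r. r \<in> R \<Longrightarrow> \<exists>j<length (pp (hd r)). take (Suc j) r = take (Suc j) (pp (hd r)) \<and>
        set (drop (Suc j) r) = set r \<inter> T"
    "T \<subseteq> \<Union> (set ` R)"
  using assms unfolding Inv_def by blast+

lemma cross_T: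
  assumes inv: "Inv R z T" and r': "r' \<in> R"
  shows "set r' \<inter> set (pp z) \<subseteq> T"
proof
  fix v assume v: "v \<in> set r' \<inter> set (pp z)"
  obtain j where j: "j < length (pp (hd r'))" "take (Suc j) r' = take (Suc j) (pp (hd r'))"
    "set (drop (Suc j) r') = set r' \<inter> T" using InvD(6)[OF inv r'] by blast
  have hS: "hd r' \<in> S" "hd r' \<noteq> z" "z \<in> S" using r' InvD(1,4)[OF inv] by auto
  have "set r' = set (take (Suc j) r') \<union> set (drop (Suc j) r')"
    using set_append[of "take (Suc j) r'" "drop (Suc j) r'"] by simp
  moreover have "v \<notin> set (take (Suc j) r')"
  proof
    assume "v \<in> set (take (Suc j) r')"
    then have "v \<in> set (take (Suc j) (pp (hd r')))" using j(2) by simp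
    then have "v \<in> set (pp (hd r'))" using set_take_subset by fast
    then show False using v pp_disj[OF hS(1) hS(3) hS(2)] by auto
  qed
  ultimately show "v \<in> T" using v j(3) by auto
qed


lemma hd_inj:
  assumes inv: "Inv R z T" and "r1 \<in> R" "r2 \<in> R" "hd r1 = hd r2"
  shows "r1 = r2"
proof (rule ccontr)
  assume ne: "r1 \<noteq> r2"
  have "r1 \<noteq> []" "r2 \<noteq> []" using InvD(2)[OF inv] assms(2,3) unfolding dpath_def by auto
  then have "hd r1 \<in> set r1 \<inter> set r2" using assms(4) hd_in_set by (metis IntI)
  then show False using InvD(3)[OF inv assms(2,3) ne] by simp
qed

lemma step_lemma:
  assumes inv: "Inv R z T" and ht: "hit z T"
  obtains r new T' where "stp (R, z, T) = (insert new (R - {r}), hd r, T')"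
    "r \<in> R" "hd new = z" "Inv (insert new (R - {r})) (hd r) T'" "T' \<subseteq> T"
    "prog T z < prog T' z"
proof -
  define h where "h = prog T z"
  define w where "w = pp z ! h"
  define r where "r = (SOME r. r \<in> R \<and> w \<in> set r)"
  define k where "k = length (takeWhile (\<lambda>v. v \<noteq> w) r)"
  define new where "new = take (Suc h) (pp z) @ drop (Suc k) r"
  define T' where "T' = T - set (take (Suc k) r)"
  have st: "stp (R, z, T) = (insert new (R - {r}), hd r, T')"
    using ht unfolding stp_def h_def w_def r_def k_def new_def T'_def by (simp add: Let_def)
  have zS: "z \<in> S" using InvD(1)[OF inv] .
  have dz: "dpath V E (pp z)" using pp_path[OF zS] .
  have hlt: "h < length (pp z)" unfolding h_def prog_def
    by (rule tw_less) (use ht in \<open>auto simp: hit_def\<close>)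
  have wT: "w \<in> T" using nth_length_takeWhile[OF hlt[unfolded h_def prog_def]]
    unfolding w_def h_def prog_def by simp
  have before: "pp z ! i \<notin> T" if "i < h" for i
    using tw_before[of i "\<lambda>v. v \<notin> T" "pp z"] that unfolding h_def prog_def by simp
  have "\<exists>r. r \<in> R \<and> w \<in> set r" using InvD(7)[OF inv] wT by blast
  then have rw: "r \<in> R \<and> w \<in> set r" unfolding r_def by (rule someI_ex)
  then have rR: "r \<in> R" and wr: "w \<in> set r" by auto
  have klt: "k < length r" unfolding k_def by (rule tw_less) (use wr in auto)
  have rk: "r ! k = w" using nth_length_takeWhile[OF klt[unfolded k_def]] unfolding k_def by simp
  have hdr: "hd r \<in> S" "hd r \<noteq> z" using InvD(4)[OF inv] rR by auto
  have dr: "dpath V E r" using InvD(2)[OF inv rR] .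
  have distr: "distinct r" using dr unfolding dpath_def by simp
  obtain j where j: "j < length (pp (hd r))" "take (Suc j) r = take (Suc j) (pp (hd r))"
    "set (drop (Suc j) r) = set r \<inter> T" using InvD(6)[OF inv rR] by blast
  have jk: "Suc j \<le> k"
  proof -
    have "w \<in> set (drop (Suc j) r)" using j(3) wr wT by simp
    then obtain i where i: "i < length (drop (Suc j) r)" "drop (Suc j) r ! i = w"
      by (auto simp: in_set_conv_nth)
    then have "r ! (Suc j + i) = w" "Suc j + i < length r" by auto
    then have "Suc j + i = k" using rk klt distr nth_eq_iff_index_eq by metis
    then show ?thesis by simp
  qed
  have wtake: "w \<in> set (take (Suc k) r)"
  proof -
    have "take (Suc k) r ! k = w" using rk by simp
    moreover have "k < length (take (Suc k) r)" using klt by simp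
    ultimately show ?thesis by (metis nth_mem)
  qed
  have split_r: "set r = set (take (Suc k) r) \<union> set (drop (Suc k) r)"
    using set_append[of "take (Suc k) r" "drop (Suc k) r"] by simp
  have disj_td: "set (take (Suc k) r) \<inter> set (drop (Suc k) r) = {}"
    using distr distinct_append[of "take (Suc k) r" "drop (Suc k) r"] by simp
  have wnd: "w \<notin> set (drop (Suc k) r)" using wtake disj_td by blast
  have dropT: "set (drop (Suc k) r) \<subseteq> T"
    using set_drop_subset_set_drop[of "Suc j" "Suc k" r] jk j(3) by auto
  have take_pp: "take (Suc h) (pp z) = take h (pp z) @ [w]"
    using take_Suc_conv_app_nth[OF hlt] unfolding w_def .
  have takehT: "set (take h (pp z)) \<inter> T = {}"
  proof -
    { fix v assume "v \<in> set (take h (pp z))" "v \<in> T"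
      then obtain i where "i < length (take h (pp z))" "take h (pp z) ! i = v"
        by (auto simp: in_set_conv_nth)
      then have "i < h" "pp z ! i = v" by auto
      then have False using before \<open>v \<in> T\<close> by auto }
    then show ?thesis by blast
  qed
  have set_new: "set new = set (take h (pp z)) \<union> {w} \<union> set (drop (Suc k) r)"
    unfolding new_def take_pp by auto
  have cross: "set r' \<inter> set (pp z) \<subseteq> T" if "r' \<in> R" for r'
    using cross_T[OF inv that] .
  have takeh_sub: "set (take h (pp z)) \<subseteq> set (pp z)" by (rule set_take_subset)
  have takeh_r': "set (take h (pp z)) \<inter> set r' = {}" if "r' \<in> R" for r'
    using cross[OF that] takehT takeh_sub by blast
  have hd_new: "hd new = z"
    unfolding new_def using dz pp_hd[OF zS] unfolding dpath_def by simp
  have new_ne: "new \<noteq> []" unfolding new_def by (simp add: take_pp)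
  have dist_new: "distinct new"
  proof -
    have "distinct (take (Suc h) (pp z))" using dz unfolding dpath_def by simp
    moreover have "distinct (drop (Suc k) r)" using distr by simp
    moreover have "set (take (Suc h) (pp z)) \<inter> set (drop (Suc k) r) = {}"
      using takeh_r'[OF rR] wnd split_r unfolding take_pp by auto
    ultimately show ?thesis unfolding new_def by simp
  qed
  have setV: "set new \<subseteq> V"
  proof -
    have "set (take (Suc h) (pp z)) \<subseteq> V" using dz set_take_subset unfolding dpath_def by fast
    moreover have "set (drop (Suc k) r) \<subseteq> V" using dr set_drop_subset unfolding dpath_def by fast
    ultimately show ?thesis unfolding new_def by simp
  qed
  have succ_new: "successively (\<lambda>a b. (a, b) \<in> E) new"
  proof -
    have s1: "successively (\<lambda>a b. (a, b) \<in> E) (take (Suc h) (pp z))"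
      using dz succ_take unfolding dpath_succ by blast
    have s2: "successively (\<lambda>a b. (a, b) \<in> E) (drop (Suc k) r)"
      using dr succ_drop unfolding dpath_succ by blast
    have s3: "(last (take (Suc h) (pp z)), hd (drop (Suc k) r)) \<in> E"
      if "drop (Suc k) r \<noteq> []"
    proof -
      have "Suc k < length r" using that by simp
      then have "(r ! k, r ! Suc k) \<in> E" using dr unfolding dpath_def by blast
      moreover have "hd (drop (Suc k) r) = r ! Suc k" using \<open>Suc k < length r\<close> hd_drop_conv_nth by blast
      moreover have "last (take (Suc h) (pp z)) = w" unfolding take_pp by simp
      ultimately show ?thesis using rk by simp
    qed
    show ?thesis unfolding new_def successively_append_iff using s1 s2 s3 by blast
  qed
  have dnew: "dpath V E new" unfolding dpath_succ using new_ne dist_new setV succ_new by blast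
  have last_new: "last new = last r"
  proof (cases "drop (Suc k) r = []")
    case True
    then have "length r = Suc k" using klt by simp
    then have "r \<noteq> []" by auto
    then have "last r = w" using rk last_conv_nth[of r] \<open>length r = Suc k\<close> by simp
    then show ?thesis unfolding new_def using True take_pp by simp
  next
    case False
    then have "Suc k < length r" by simp
    then show ?thesis unfolding new_def using False by simp
  qed
  have R'def: "R - {r} \<subseteq> R" by blast
  have disj_r_other: "set (take (Suc k) r) \<inter> set r' = {}" if "r' \<in> R" "r' \<noteq> r" for r'
    using InvD(3)[OF inv rR that(1)] that(2) set_take_subset[of "Suc k" r] by blast
  have new_other: "set new \<inter> set r' = {}" if "r' \<in> R" "r' \<noteq> r" for r'
  proof -
    have "set r \<inter> set r' = {}" using InvD(3)[OF inv rR that(1)] that(2) by auto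
    then show ?thesis unfolding set_new using takeh_r'[OF that(1)] wr split_r by blast
  qed
  have inv': "Inv (insert new (R - {r})) (hd r) T'"
    unfolding Inv_def
  proof (intro conjI)
    show "hd r \<in> S" using hdr(1) .
    show "\<forall>r'\<in>insert new (R - {r}). dpath V E r'" using dnew InvD(2)[OF inv] by blast
    show "\<forall>r1\<in>insert new (R - {r}). \<forall>r2\<in>insert new (R - {r}). r1 \<noteq> r2 \<longrightarrow> set r1 \<inter> set r2 = {}"
      using new_other InvD(3)[OF inv] by blast
    show "hd ` insert new (R - {r}) = S - {hd r}"
    proof -
      have "hd ` (R - {r}) = hd ` R - {hd r}"
        using hd_inj[OF inv] rR by blast
      then show ?thesis using hd_new InvD(4)[OF inv] zS hdr by auto
    qed
    show "\<forall>r'\<in>insert new (R - {r}). last r' \<in> Y'" using last_new InvD(5)[OF inv] rR by auto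
    show "\<forall>r'\<in>insert new (R - {r}). \<exists>j<length (pp (hd r')). take (Suc j) r' = take (Suc j) (pp (hd r')) \<and>
        set (drop (Suc j) r') = set r' \<inter> T'"
    proof
      fix r' assume r': "r' \<in> insert new (R - {r})"
      show "\<exists>j<length (pp (hd r')). take (Suc j) r' = take (Suc j) (pp (hd r')) \<and>
        set (drop (Suc j) r') = set r' \<inter> T'"
      proof (cases "r' = new")
        case True
        have "take (Suc h) new = take (Suc h) (pp z)" unfolding new_def using hlt by simp
        moreover have "drop (Suc h) new = drop (Suc k) r" unfolding new_def using hlt by simp
        moreover have "set (drop (Suc k) r) = set new \<inter> T'"
        proof
          show "set (drop (Suc k) r) \<subseteq> set new \<inter> T'"
            using dropT disj_td unfolding T'_def set_new by blast
          show "set new \<inter> T' \<subseteq> set (drop (Suc k) r)"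
            using takehT wtake unfolding T'_def set_new by blast
        qed
        ultimately show ?thesis using True hd_new hlt by metis
      next
        case False
        then have r'R: "r' \<in> R" "r' \<noteq> r" using r' by auto
        obtain j' where j': "j' < length (pp (hd r'))" "take (Suc j') r' = take (Suc j') (pp (hd r'))"
          "set (drop (Suc j') r') = set r' \<inter> T" using InvD(6)[OF inv r'R(1)] by blast
        have "set r' \<inter> T' = set r' \<inter> T" using disj_r_other[OF r'R] unfolding T'_def by blast
        then show ?thesis using j' by metis
      qed
    qed
    show "T' \<subseteq> \<Union> (set ` insert new (R - {r}))"
    proof
      fix v assume v: "v \<in> T'"
      then have "v \<in> T" "v \<notin> set (take (Suc k) r)" unfolding T'_def by auto
      then obtain r'' where r'': "r'' \<in> R" "v \<in> set r''" using InvD(7)[OF inv] by blast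
      show "v \<in> \<Union> (set ` insert new (R - {r}))"
      proof (cases "r'' = r")
        case True
        then have "v \<in> set new" using r'' \<open>v \<notin> set (take (Suc k) r)\<close> split_r set_new by blast
        then show ?thesis by blast
      next
        case False
        then show ?thesis using r'' by blast
      qed
    qed
  qed
  have T'T: "T' \<subseteq> T" unfolding T'_def by blast
  have "Suc h \<le> prog T' z" unfolding prog_def
  proof (rule length_takeWhile_less_P_nth)
    fix i assume "i < Suc h"
    then show "pp z ! i \<notin> T'"
    proof (cases "i < h")
      case True
      then show ?thesis using before T'T by blast
    next
      case False
      then have "i = h" using \<open>i < Suc h\<close> by simp
      then show ?thesis using wtake unfolding T'_def w_def by simp
    qed
  next
    show "Suc h \<le> length (pp z)" using hlt by simp
  qed
  then have "prog T z < prog T' z" unfolding h_def by simp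
  then show ?thesis using that st rR hd_new inv' T'T by blast
qed


lemma core:
  assumes inv0: "Inv R0 z0 T0"
  shows "\<exists>R y. y \<in> Y \<and> (\<forall>r\<in>R. dpath V E r) \<and>
     (\<forall>r\<in>R. \<forall>r'\<in>R. r \<noteq> r' \<longrightarrow> set r \<inter> set r' = {}) \<and> hd ` R = S \<and>
     (\<forall>r\<in>R. last r \<in> insert y Y')"
proof -
  define s where "s n = (stp ^^ n) (R0, z0, T0)" for n
  define Rs where "Rs n = fst (s n)" for n
  define zs where "zs n = fst (snd (s n))" for n
  define Ts where "Ts n = snd (snd (s n))" for n
  have s_eq: "s n = (Rs n, zs n, Ts n)" for n unfolding Rs_def zs_def Ts_def by simp
  have sSuc: "s (Suc n) = stp (s n)" for n unfolding s_def by simp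
  have invs: "Inv (Rs n) (zs n) (Ts n)" for n
  proof (induction n)
    case 0
    then show ?case using inv0 unfolding Rs_def zs_def Ts_def s_def by simp
  next
    case (Suc n)
    show ?case
    proof (cases "hit (zs n) (Ts n)")
      case True
      obtain r new T' where o: "stp (Rs n, zs n, Ts n) = (insert new (Rs n - {r}), hd r, T')"
        "r \<in> Rs n" "hd new = zs n" "Inv (insert new (Rs n - {r})) (hd r) T'" "T' \<subseteq> Ts n"
        "prog (Ts n) (zs n) < prog T' (zs n)"
        by (rule step_lemma[OF Suc.IH True])
      have "s (Suc n) = (insert new (Rs n - {r}), hd r, T')" using o(1) sSuc s_eq by simp
      then show ?thesis using o(4) s_eq[of "Suc n"] by simp
    next
      case False
      then have "stp (Rs n, zs n, Ts n) = (Rs n, zs n, Ts n)" unfolding stp_def by simp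
      then have "s (Suc n) = s n" using sSuc s_eq by simp
      then show ?thesis using Suc.IH s_eq[of n] s_eq[of "Suc n"] by simp
    qed
  qed
  show ?thesis
  proof (cases "\<exists>n. \<not> hit (zs n) (Ts n)")
    case True
    then obtain n where nh: "\<not> hit (zs n) (Ts n)" by blast
    define z where "z = zs n"
    define R where "R = Rs n"
    have inv: "Inv R z (Ts n)" unfolding R_def z_def using invs .
    have zS: "z \<in> S" using InvD(1)[OF inv] .
    have disj: "set r \<inter> set (pp z) = {}" if "r \<in> R" for r
      using cross_T[OF inv that] nh unfolding hit_def z_def by blast
    show ?thesis
    proof (intro exI conjI)
      show "last (pp z) \<in> Y" using pp_last[OF zS] .
      show "\<forall>r\<in>insert (pp z) R. dpath V E r" using pp_path[OF zS] InvD(2)[OF inv] by blast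
      show "\<forall>r\<in>insert (pp z) R. \<forall>r'\<in>insert (pp z) R. r \<noteq> r' \<longrightarrow> set r \<inter> set r' = {}"
        using disj InvD(3)[OF inv] by blast
      show "hd ` insert (pp z) R = S" using InvD(4)[OF inv] pp_hd[OF zS] zS by auto
      show "\<forall>r\<in>insert (pp z) R. last r \<in> insert (last (pp z)) Y'" using InvD(5)[OF inv] by blast
    qed
  next
    case False
    then have allhit: "hit (zs n) (Ts n)" for n by blast
    have stepfacts: "Ts (Suc n) \<subseteq> Ts n \<and> prog (Ts n) (zs n) < prog (Ts (Suc n)) (zs n) \<and>
        (\<forall>r\<in>Rs n. hd r \<noteq> zs (Suc n) \<longrightarrow> r \<in> Rs (Suc n))" for n
    proof -
      obtain r new T' where o: "stp (Rs n, zs n, Ts n) = (insert new (Rs n - {r}), hd r, T')"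
        "r \<in> Rs n" "hd new = zs n" "Inv (insert new (Rs n - {r})) (hd r) T'" "T' \<subseteq> Ts n"
        "prog (Ts n) (zs n) < prog T' (zs n)"
        by (rule step_lemma[OF invs allhit])
      have "s (Suc n) = (insert new (Rs n - {r}), hd r, T')" using o(1) sSuc s_eq by simp
      then have e: "Rs (Suc n) = insert new (Rs n - {r})" "zs (Suc n) = hd r" "Ts (Suc n) = T'"
        using s_eq[of "Suc n"] by simp_all
      show ?thesis using e o(5,6) by auto
    qed
    have fin: "\<exists>N. \<forall>m\<ge>N. zs m \<noteq> t" for t
    proof -
      define g where "g m = prog (Ts m) t" for m
      have gmono: "g m \<le> g (Suc m)" for m unfolding g_def using stepfacts prog_mono by blast
      have gle: "n \<le> m \<Longrightarrow> g n \<le> g m" for n m using lift_Suc_mono_le[of g, OF gmono] by blast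
      define A where "A = {m. zs m = t}"
      have glt: "g n < g m" if "n \<in> A" "m \<in> A" "n < m" for n m
      proof -
        have "g n < g (Suc n)" using stepfacts[of n] that(1) unfolding g_def A_def by simp
        moreover have "g (Suc n) \<le> g m" using gle that(3) by simp
        ultimately show ?thesis by simp
      qed
      have "inj_on g A"
      proof (rule inj_onI)
        fix a b assume "a \<in> A" "b \<in> A" "g a = g b"
        then show "a = b" using glt by (metis less_irrefl linorder_neqE_nat)
      qed
      moreover have "g ` A \<subseteq> {..length (pp t)}" unfolding g_def using prog_le by auto
      ultimately have "finite A" using inj_on_finite by blast
      then obtain N where "\<forall>m\<in>A. m < N" using finite_nat_set_iff_bounded by blast
      then show ?thesis unfolding A_def by (metis leD mem_Collect_eq)
    qed
    have stay: "r \<in> Rs (n + d)" if "r \<in> Rs n" "\<forall>m\<ge>n. zs m \<noteq> hd r" for r n d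
    proof (induction d)
      case 0
      then show ?case using that by simp
    next
      case (Suc d)
      have "zs (Suc (n + d)) \<noteq> hd r" using that(2) by simp
      then show ?case using stepfacts[of "n + d"] Suc.IH by simp
    qed
    define Rinf where "Rinf = {r. \<exists>n. \<forall>m\<ge>n. r \<in> Rs m}"
    have z0S: "z0 \<in> S" using InvD(1)[OF inv0] .
    show ?thesis
    proof (intro exI conjI)
      show "last (pp z0) \<in> Y" using pp_last[OF z0S] .
      show "\<forall>r\<in>Rinf. dpath V E r" unfolding Rinf_def using InvD(2)[OF invs] by blast
      show "\<forall>r\<in>Rinf. \<forall>r'\<in>Rinf. r \<noteq> r' \<longrightarrow> set r \<inter> set r' = {}"
      proof (intro ballI impI)
        fix r r' assume "r \<in> Rinf" "r' \<in> Rinf" "r \<noteq> r'"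
        then obtain n n' where "\<forall>m\<ge>n. r \<in> Rs m" "\<forall>m\<ge>n'. r' \<in> Rs m" unfolding Rinf_def by blast
        then have "r \<in> Rs (max n n')" "r' \<in> Rs (max n n')" by auto
        then show "set r \<inter> set r' = {}" using InvD(3)[OF invs] \<open>r \<noteq> r'\<close> by blast
      qed
      show "hd ` Rinf = S"
      proof
        show "hd ` Rinf \<subseteq> S" unfolding Rinf_def using InvD(4)[OF invs] by blast
        show "S \<subseteq> hd ` Rinf"
        proof
          fix t assume tS: "t \<in> S"
          obtain N where N: "\<forall>m\<ge>N. zs m \<noteq> t" using fin by blast
          then have "t \<in> hd ` Rs N" using InvD(4)[OF invs, of N] tS by auto
          then obtain r where r: "r \<in> Rs N" "hd r = t" by blast
          have "\<forall>m\<ge>N. r \<in> Rs m"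
          proof (intro allI impI)
            fix m assume "N \<le> m"
            then obtain d where "m = N + d" using le_Suc_ex by blast
            then show "r \<in> Rs m" using stay[OF r(1)] N r(2) by simp
          qed
          then have "r \<in> Rinf" unfolding Rinf_def by blast
          then show "t \<in> hd ` Rinf" using r(2) by blast
        qed
      qed
      show "\<forall>r\<in>Rinf. last r \<in> insert (last (pp z0)) Y'" unfolding Rinf_def using InvD(5)[OF invs] by blast
    qed
  qed
qed

end


lemma inner_free:
  assumes dp: "dpath V E p" and noin: "\<forall>x\<in>X. \<forall>u. (u, x) \<notin> E"
    and noout: "\<forall>y\<in>Y. \<forall>w. (y, w) \<notin> E"
  shows "set (butlast (tl p)) \<inter> (X \<union> Y) = {}"
proof -
  { fix v assume "v \<in> set (butlast (tl p))"
    then obtain m where m: "m < length (butlast (tl p))" "butlast (tl p) ! m = v"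
      by (auto simp: in_set_conv_nth)
    then have m2: "Suc (Suc m) < length p" by simp
    have v: "v = p ! Suc m" using m by (simp add: nth_butlast nth_tl)
    have "(p ! m, p ! Suc m) \<in> E" using dp m2 unfolding dpath_def by simp
    then have "v \<notin> X" using noin v by blast
    moreover have "(p ! Suc m, p ! Suc (Suc m)) \<in> E" using dp m2 unfolding dpath_def by simp
    then have "v \<notin> Y" using noout v by blast
    ultimately have "v \<notin> X \<union> Y" by blast }
  then show ?thesis by blast
qed

lemma tl_not_X:
  assumes dp: "dpath V E p" and noin: "\<forall>x\<in>X. \<forall>u. (u, x) \<notin> E"
  shows "set (tl p) \<inter> X = {}"
proof -
  { fix v assume "v \<in> set (tl p)"
    then obtain m where m: "m < length (tl p)" "tl p ! m = v"
      by (auto simp: in_set_conv_nth)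
    then have m2: "Suc m < length p" by simp
    have v: "v = p ! Suc m" using m by (simp add: nth_tl)
    have "(p ! m, p ! Suc m) \<in> E" using dp m2 unfolding dpath_def by simp
    then have "v \<notin> X" using noin v by blast }
  then show ?thesis by blast
qed

lemma joinable_intro:
  assumes noin: "\<forall>x\<in>X. \<forall>u. (u, x) \<notin> E" and noout: "\<forall>y\<in>Y. \<forall>w. (y, w) \<notin> E"
    and AX: "A \<subseteq> X" and BY: "B \<subseteq> Y"
    and paths: "\<forall>r\<in>R. dpath V E r"
    and disj: "\<forall>r\<in>R. \<forall>r'\<in>R. r \<noteq> r' \<longrightarrow> set r \<inter> set r' = {}"
    and hds: "hd ` R = A" and lasts: "\<forall>r\<in>R. last r \<in> B"
  shows "joinable V E A B"
  unfolding joinable_def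
proof (intro exI conjI)
  show "init_vertices R = A" unfolding init_vertices_def using hds .
  show "AB_path_system V E A B R" unfolding AB_path_system_def
  proof (intro conjI ballI impI)
    fix p assume p: "p \<in> R"
    have "set (butlast (tl p)) \<inter> (X \<union> Y) = {}" using inner_free[OF _ noin noout] paths p by blast
    then have "set (butlast (tl p)) \<inter> (A \<union> B) = {}" using AX BY by blast
    then show "AB_path V E A B p" unfolding AB_path_def using paths p hds lasts by blast
  next
    fix p q assume "p \<in> R" "q \<in> R" "p \<noteq> q"
    then show "set p \<inter> set q = {}" using disj by blast
  qed
qed

lemma one_step:
  fixes V :: "'a set" and E :: "('a \<times> 'a) set" and X Y X' Y' :: "'a set"
  assumes noin: "\<forall>x\<in>X. \<forall>u. (u, x) \<notin> E"
    and noout: "\<forall>y\<in>Y. \<forall>w. (y, w) \<notin> E"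
    and jXY: "joinable V E X Y"
    and X'X: "X' \<subseteq> X" and Y'Y: "Y' \<subseteq> Y"
    and jQ: "joinable V E X' Y'"
    and xX: "x \<in> X" and xX': "x \<notin> X'"
  shows "\<exists>y\<in>Y. joinable V E (insert x X') (insert y Y')"
proof -
  obtain P where P: "AB_path_system V E X Y P" "hd ` P = X"
    using jXY unfolding joinable_def init_vertices_def by blast
  obtain Q where Q: "AB_path_system V E X' Y' Q" "hd ` Q = X'"
    using jQ unfolding joinable_def init_vertices_def by blast
  define S where "S = insert x X'"
  have SX: "S \<subseteq> X" unfolding S_def using xX X'X by blast
  define pp where "pp t = (SOME p. p \<in> P \<and> hd p = t)" for t
  have ppP: "pp t \<in> P \<and> hd (pp t) = t" if "t \<in> X" for t
  proof -
    have "\<exists>p. p \<in> P \<and> hd p = t" using P(2) that by blast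
    then show ?thesis unfolding pp_def by (rule someI_ex)
  qed
  interpret aug V E S Y Y' pp
  proof
    fix t assume "t \<in> S"
    then have t: "pp t \<in> P" "hd (pp t) = t" using ppP SX by blast+
    then have ab: "AB_path V E X Y (pp t)" using P(1) unfolding AB_path_system_def by blast
    show "dpath V E (pp t)" using ab unfolding AB_path_def by blast
    show "hd (pp t) = t" using t(2) .
    show "last (pp t) \<in> Y" using ab unfolding AB_path_def by blast
  next
    fix t t' assume "t \<in> S" "t' \<in> S" "t \<noteq> t'"
    then have "pp t \<in> P" "pp t' \<in> P" "pp t \<noteq> pp t'" using ppP SX by (metis subsetD)+
    then show "set (pp t) \<inter> set (pp t') = {}" using P(1) unfolding AB_path_system_def by blast
  qed
  define T0 where "T0 = \<Union> (set ` Q) - X'"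
  have Qab: "AB_path V E X' Y' q" if "q \<in> Q" for q using Q(1) that unfolding AB_path_system_def by blast
  have Qd: "dpath V E q" if "q \<in> Q" for q using Qab[OF that] unfolding AB_path_def by blast
  have inv0: "Inv Q x T0" unfolding Inv_def
  proof (intro conjI)
    show "x \<in> S" unfolding S_def by simp
    show "\<forall>r\<in>Q. dpath V E r" using Qd by blast
    show "\<forall>r\<in>Q. \<forall>r'\<in>Q. r \<noteq> r' \<longrightarrow> set r \<inter> set r' = {}" using Q(1) unfolding AB_path_system_def by blast
    show "hd ` Q = S - {x}" using Q(2) xX' unfolding S_def by blast
    show "\<forall>r\<in>Q. last r \<in> Y'" using Qab unfolding AB_path_def by blast
    show "T0 \<subseteq> \<Union> (set ` Q)" unfolding T0_def by blast
    show "\<forall>r\<in>Q. \<exists>j<length (pp (hd r)). take (Suc j) r = take (Suc j) (pp (hd r)) \<and>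
        set (drop (Suc j) r) = set r \<inter> T0"
    proof
      fix q assume q: "q \<in> Q"
      have hq: "hd q \<in> X'" using Q(2) q by blast
      then have hS: "hd q \<in> S" unfolding S_def by blast
      have qne: "q \<noteq> []" using Qd[OF q] unfolding dpath_def by blast
      have pne: "pp (hd q) \<noteq> []" using pp_path[OF hS] unfolding dpath_def by blast
      have "take (Suc 0) q = [hd q]" using qne by (cases q) auto
      moreover have "take (Suc 0) (pp (hd q)) = [hd q]" using pne pp_hd[OF hS] by (cases "pp (hd q)") auto
      moreover have "set (drop (Suc 0) q) = set q \<inter> T0"
      proof
        have "set (tl q) \<inter> X = {}" using tl_not_X[OF Qd[OF q] noin] .
        moreover have "set (tl q) \<subseteq> set q" by (cases q) auto
        ultimately show "set (drop (Suc 0) q) \<subseteq> set q \<inter> T0"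
          unfolding T0_def using q X'X by (auto simp: drop_Suc)
        show "set q \<inter> T0 \<subseteq> set (drop (Suc 0) q)"
        proof
          fix v assume v: "v \<in> set q \<inter> T0"
          then have "v \<noteq> hd q" using hq unfolding T0_def by blast
          moreover have "q = hd q # tl q" using qne by simp
          ultimately show "v \<in> set (drop (Suc 0) q)" using v by (metis IntD1 drop_Suc drop_0 set_ConsD)
        qed
      qed
      ultimately show "\<exists>j<length (pp (hd q)). take (Suc j) q = take (Suc j) (pp (hd q)) \<and>
        set (drop (Suc j) q) = set q \<inter> T0" using pne by (intro exI[of _ 0]) auto
    qed
  qed
  obtain R y where R: "y \<in> Y" "\<forall>r\<in>R. dpath V E r"
     "\<forall>r\<in>R. \<forall>r'\<in>R. r \<noteq> r' \<longrightarrow> set r \<inter> set r' = {}" "hd ` R = S"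
     "\<forall>r\<in>R. last r \<in> insert y Y'" using core[OF inv0] by blast
  have "joinable V E S (insert y Y')"
    by (rule joinable_intro[OF noin noout SX _ R(2,3,4,5)]) (use R(1) Y'Y in blast)
  then show ?thesis using R(1) unfolding S_def by blast
qed

theorem lemma4p3:
  fixes V :: "'a set" and E :: "('a \<times> 'a) set" and X Y X' Y' :: "'a set"
  assumes "digraph V E"
    and "X \<subseteq> V" and "Y \<subseteq> V"
    and "\<forall>x\<in>X. \<forall>u. (u, x) \<notin> E"
    and "\<forall>y\<in>Y. \<forall>w. (y, w) \<notin> E"
    and "joinable V E X Y"
    and "X' \<subseteq> X" and "Y' \<subseteq> Y"
    and "finite (X - X')"
    and "joinable V E X' Y'"
  shows "\<exists>Y''. Y'' \<subseteq> Y \<and> joinable V E X Y'' \<and>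
           finite (Y'' - Y') \<and> card (Y'' - Y') \<le> card (X - X')"
  using assms(7-10)
proof (induction "card (X - X')" arbitrary: X' Y')
  case 0
  then have "X' = X" by auto
  then show ?case using 0 by (intro exI[of _ Y']) auto
next
  case (Suc n)
  then obtain x where x: "x \<in> X" "x \<notin> X'" by (metis Diff_eq_empty_iff card_0_eq nat.simps(3) subsetI)
  obtain y where y: "y \<in> Y" "joinable V E (insert x X') (insert y Y')"
    using one_step[OF assms(4,5,6) Suc.prems(1,2,4) x] by blast
  have eq: "X - insert x X' = (X - X') - {x}" by blast
  have cn: "n = card (X - insert x X')" unfolding eq using Suc.hyps(2) x Suc.prems(3) by simp
  obtain Y'' where Y'': "Y'' \<subseteq> Y" "joinable V E X Y''" "finite (Y'' - insert y Y')"
      "card (Y'' - insert y Y') \<le> card (X - insert x X')"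
    using Suc.hyps(1)[OF cn] x y Suc.prems by (metis Diff_subset eq finite_subset insert_subset)
  have sub: "Y'' - Y' \<subseteq> insert y (Y'' - insert y Y')" by blast
  have fin: "finite (Y'' - Y')" using finite_subset[OF sub] Y''(3) by blast
  have "card (Y'' - Y') \<le> card (insert y (Y'' - insert y Y'))" using card_mono[OF _ sub] Y''(3) by simp
  also have "\<dots> \<le> Suc (card (Y'' - insert y Y'))" by (subst card_insert_disjoint[OF Y''(3)]) auto
  also have "\<dots> \<le> Suc n" using Y''(4) cn by simp
  finally show ?case using Y''(1,2) fin Suc.hyps(2) by auto
qed

end
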